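(* Let $n\ge4$. The flat twisted braid group $\mathcal{FT}_n$ has the following reduced presentation: it is isomorphic to the group $$G=\langle\, c_1, b_1, v_1,\dots,v_{n-1} \mid R\,\rangle$$ where $R$ consists of the relations $v_iv_{i+1}v_i=v_{i+1}v_iv_{i+1}$ ($1\le i\le n-2$), $v_iv_j=v_jv_i$ ($|i-j|\ge2$), $v_i^2=1$ ($1\le i\le n-1$), $c_1v_j=v_jc_1$ ($j>2$), $c_1^2=1$, $b_1^2=1$, $b_1v_j=v_jb_1$ ($j>1$), $(v_1c_1v_1)(v_2c_1v_2)(v_1c_1v_1)=(v_2c_1v_2)(v_1c_1v_1)(v_2c_1v_2)$, $c_1(v_2v_3v_1v_2c_1v_2v_1v_3v_2)=(v_2v_3v_1v_2c_1v_2v_1v_3v_2)c_1$, $b_1(v_1b_1v_1)=(v_1b_1v_1)b_1$, $c_1(v_2v_1b_1v_1v_2)=(v_2v_1b_1v_1v_2)c_1$, $(v_1b_1v_1)b_1c_1b_1(v_1b_1v_1)=v_1c_1v_1$. The isomorphism $G\to\mathcal{FT}_n$ sends $c_1,b_1,v_1,\dots,v_{n-1}$ to the elements of the same names, and its inverse sends $v_i\mapsto v_i$, $c_1\mapsto c_1$, $b_1\mapsto b_1$, $c_{i+1}\mapsto (v_i\cdots v_2v_1)(v_{i+1}\cdots v_3v_2)c_1(v_2v_3\cdots v_{i+1})(v_1v_2\cdots v_i)$ for $1\le i\le n-2$, and $b_{i+1}\mapsto(v_iv_{i-1}\cdots v_1)b_1(v_1v_2\cdots v_i)$ for $1\le i\le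 n-1$.
   Context: The flat twisted braid group $\mathcal{FT}_n$ (the group of flat twisted braids on $n$ strands: braids with flat crossings, i.e. crossings without over/under information, virtual crossings and bars on strands, under concatenation) is the group with generators $c_1,\dots,c_{n-1}$ (flat crossing of strands $i,i+1$), $v_1,\dots,v_{n-1}$ (virtual crossing) and $b_1,\dots,b_n$ (bar on strand $i$), subject to the relations: virtual relations $v_i^2=1$, $v_iv_j=v_jv_i$ ($|i-j|\ge2$), $v_iv_{i+1}v_i=v_{i+1}v_iv_{i+1}$; twisted relations $b_i^2=1$ ($1\le i\le n$), $b_ib_j=b_jb_i$ ($i\neq j$); mixed relations $b_iv_i=v_ib_{i+1}$ ($1\le i\le n-1$), $b_iv_j=v_jb_i$ ($j>i$ or $j<i-1$); flat relations $c_i^2=1$, $c_ic_{i+1}c_i=c_{i+1}c_ic_{i+1}$ ($1\le i\le n-2$), $c_ic_j=c_jc_i$ ($|i-j|\ge2$); mixed flat relations $c_iv_j=v_jc_i$ ($|i-j|\ge2$), $v_ic_{i+1}v_i=v_{i+1}c_iv_{i+1}$ ($1\le i\le n-2$), $b_ib_{i+1}c_ib_{i+1}b_i=v_ic_iv_i$ ($1\le i\le n-1$), $b_ic_j=c_jb_i$ ($j>i$ or $j<i-1$). *)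

theory Defs
  imports "HOL-Algebra.Group"
begin

text \<open>A word is a list of letters; a letter is a generator with an exponent sign
  (True = +1, False = -1).\<close>
type_synonym 'a word = "('a \<times> bool) list"

definition inv_letter :: "'a \<times> bool \<Rightarrow> 'a \<times> bool" where
  "inv_letter x = (fst x, \<not> snd x)"

definition inv_word :: "'a word \<Rightarrow> 'a word" where
  "inv_word w = rev (map inv_letter w)"

inductive pres_eq :: "('a word \<times> 'a word) set \<Rightarrow> 'a word \<Rightarrow> 'a word \<Rightarrow> bool"
  for R where
  refl: "pres_eq R w w"
| sym: "pres_eq R u w \<Longrightarrow> pres_eq R w u"
| trans: "pres_eq R u w \<Longrightarrow> pres_eq R w z \<Longrightarrow> pres_eq R u z"
| cancel: "pres_eq R (u @ [x, inv_letter x] @ v) (u @ v)"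
| rel: "(l, r) \<in> R \<Longrightarrow> pres_eq R (u @ l @ v) (u @ r @ v)"

definition pres_class :: "('a word \<times> 'a word) set \<Rightarrow> 'a word \<Rightarrow> 'a word set" where
  "pres_class R w = {w'. pres_eq R w w'}"

definition pres_group :: "'a set \<Rightarrow> ('a word \<times> 'a word) set \<Rightarrow> 'a word set monoid" where
  "pres_group S R = \<lparr>carrier = {pres_class R w | w. fst ` set w \<subseteq> S},
     mult = (\<lambda>A B. {w. \<exists>a\<in>A. \<exists>b\<in>B. pres_eq R w (a @ b)}),
     one = pres_class R []\<rparr>"

definition subst_word :: "('a \<Rightarrow> 'b word) \<Rightarrow> 'a word \<Rightarrow> 'b word" where
  "subst_word f w = concat (map (\<lambda>x. if snd x then f (fst x) else inv_word (f (fst x))) w)"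

definition induced_map :: "('b word \<times> 'b word) set \<Rightarrow> ('a \<Rightarrow> 'b word) \<Rightarrow> 'a word set \<Rightarrow> 'b word set" where
  "induced_map R' f A = {w'. \<exists>w\<in>A. pres_eq R' (subst_word f w) w'}"

datatype gen = C nat | V nat | B nat

definition pw :: "gen list \<Rightarrow> gen word" where
  "pw xs = map (\<lambda>x. (x, True)) xs"

definition FT_gens :: "nat \<Rightarrow> gen set" where
  "FT_gens n = {C i | i. 1 \<le> i \<and> i \<le> n - 1} \<union> {V i | i. 1 \<le> i \<and> i \<le> n - 1}
      \<union> {B i | i. 1 \<le> i \<and> i \<le> n}"

definition FT_rels :: "nat \<Rightarrow> (gen word \<times> gen word) set" where
  "FT_rels n =
     \<comment> \<open>virtual relations\<close>
     {(pw [V i, V i], []) | i. 1 \<le> i \<and> i \<le> n - 1}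
   \<union> {(pw [V i, V j], pw [V j, V i]) | i j. 1 \<le> i \<and> i \<le> n - 1 \<and> 1 \<le> j \<and> j \<le> n - 1
        \<and> (i + 2 \<le> j \<or> j + 2 \<le> i)}
   \<union> {(pw [V i, V (i+1), V i], pw [V (i+1), V i, V (i+1)]) | i. 1 \<le> i \<and> i \<le> n - 2}
     \<comment> \<open>twisted relations\<close>
   \<union> {(pw [B i, B i], []) | i. 1 \<le> i \<and> i \<le> n}
   \<union> {(pw [B i, B j], pw [B j, B i]) | i j. 1 \<le> i \<and> i \<le> n \<and> 1 \<le> j \<and> j \<le> n \<and> i \<noteq> j}
     \<comment> \<open>mixed relations\<close>
   \<union> {(pw [B i, V i], pw [V i, B (i+1)]) | i. 1 \<le> i \<and> i \<le> n - 1}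
   \<union> {(pw [B i, V j], pw [V j, B i]) | i j. 1 \<le> i \<and> i \<le> n \<and> 1 \<le> j \<and> j \<le> n - 1
        \<and> (j > i \<or> j + 1 < i)}
     \<comment> \<open>flat relations\<close>
   \<union> {(pw [C i, C i], []) | i. 1 \<le> i \<and> i \<le> n - 1}
   \<union> {(pw [C i, C (i+1), C i], pw [C (i+1), C i, C (i+1)]) | i. 1 \<le> i \<and> i \<le> n - 2}
   \<union> {(pw [C i, C j], pw [C j, C i]) | i j. 1 \<le> i \<and> i \<le> n - 1 \<and> 1 \<le> j \<and> j \<le> n - 1
        \<and> (i + 2 \<le> j \<or> j + 2 \<le> i)}
     \<comment> \<open>mixed flat relations\<close>
   \<union> {(pw [C i, V j], pw [V j, C i]) | i j. 1 \<le> i \<and> i \<le> n - 1 \<and> 1 \<le> j \<and> j \<le> n - 1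
        \<and> (i + 2 \<le> j \<or> j + 2 \<le> i)}
   \<union> {(pw [V i, C (i+1), V i], pw [V (i+1), C i, V (i+1)]) | i. 1 \<le> i \<and> i \<le> n - 2}
   \<union> {(pw [B i, B (i+1), C i, B (i+1), B i], pw [V i, C i, V i]) | i. 1 \<le> i \<and> i \<le> n - 1}
   \<union> {(pw [B i, C j], pw [C j, B i]) | i j. 1 \<le> i \<and> i \<le> n \<and> 1 \<le> j \<and> j \<le> n - 1
        \<and> (j > i \<or> j + 1 < i)}"

definition FT :: "nat \<Rightarrow> gen word set monoid" where
  "FT n = pres_group (FT_gens n) (FT_rels n)"

definition red_gens :: "nat \<Rightarrow> gen set" where
  "red_gens n = {C 1, B 1} \<union> {V i | i. 1 \<le> i \<and> i \<le> n - 1}"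

definition red_rels :: "nat \<Rightarrow> (gen word \<times> gen word) set" where
  "red_rels n =
     {(pw [V i, V (i+1), V i], pw [V (i+1), V i, V (i+1)]) | i. 1 \<le> i \<and> i \<le> n - 2}
   \<union> {(pw [V i, V j], pw [V j, V i]) | i j. 1 \<le> i \<and> i \<le> n - 1 \<and> 1 \<le> j \<and> j \<le> n - 1
        \<and> (i + 2 \<le> j \<or> j + 2 \<le> i)}
   \<union> {(pw [V i, V i], []) | i. 1 \<le> i \<and> i \<le> n - 1}
   \<union> {(pw [C 1, V j], pw [V j, C 1]) | j. 2 < j \<and> j \<le> n - 1}
   \<union> {(pw [C 1, C 1], []), (pw [B 1, B 1], [])}
   \<union> {(pw [B 1, V j], pw [V j, B 1]) | j. 1 < j \<and> j \<le> n - 1}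
   \<union> {(pw [V 1, C 1, V 1, V 2, C 1, V 2, V 1, C 1, V 1],
        pw [V 2, C 1, V 2, V 1, C 1, V 1, V 2, C 1, V 2]),
      (pw [C 1, V 2, V 3, V 1, V 2, C 1, V 2, V 1, V 3, V 2],
        pw [V 2, V 3, V 1, V 2, C 1, V 2, V 1, V 3, V 2, C 1]),
      (pw [B 1, V 1, B 1, V 1], pw [V 1, B 1, V 1, B 1]),
      (pw [C 1, V 2, V 1, B 1, V 1, V 2], pw [V 2, V 1, B 1, V 1, V 2, C 1]),
      (pw [V 1, B 1, V 1, B 1, C 1, B 1, V 1, B 1, V 1], pw [V 1, C 1, V 1])}"

definition Gred :: "nat \<Rightarrow> gen word set monoid" where
  "Gred n = pres_group (red_gens n) (red_rels n)"

definition vdown :: "nat \<Rightarrow> nat \<Rightarrow> gen list" where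
  "vdown i j = map V (rev [j..<i+1])"

definition vup :: "nat \<Rightarrow> nat \<Rightarrow> gen list" where
  "vup j i = map V [j..<i+1]"

definition phi_gen :: "gen \<Rightarrow> gen word" where
  "phi_gen g = pw [g]"

fun psi_gen :: "gen \<Rightarrow> gen word" where
  "psi_gen (V i) = pw [V i]"
| "psi_gen (C k) = (if k \<le> 1 then pw [C k] else
     pw (vdown (k-1) 1 @ vdown k 2 @ [C 1] @ vup 2 k @ vup 1 (k-1)))"
| "psi_gen (B k) = (if k \<le> 1 then pw [B k] else
     pw (vdown (k-1) 1 @ [B 1] @ vup 1 (k-1)))"

end

theory Submission
  imports Defs
begin


lemma pres_eq_ctx: "pres_eq R a b \<Longrightarrow> pres_eq R (u @ a @ v) (u @ b @ v)"
proof (induction rule: pres_eq.induct)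
  case (refl w) then show ?case by (rule pres_eq.refl)
next
  case (sym a w) then show ?case by (blast intro: pres_eq.sym)
next
  case (trans a w z) then show ?case by (metis pres_eq.trans)
next
  case (cancel u' x v')
  have "pres_eq R ((u @ u') @ [x, inv_letter x] @ (v' @ v)) ((u @ u') @ (v' @ v))"
    by (rule pres_eq.cancel)
  then show ?case by simp
next
  case (rel l r u' v')
  have "pres_eq R ((u @ u') @ l @ (v' @ v)) ((u @ u') @ r @ (v' @ v))"
    by (rule pres_eq.rel[OF rel])
  then show ?case by simp
qed

lemma pres_eq_app: "pres_eq R a a' \<Longrightarrow> pres_eq R b b' \<Longrightarrow> pres_eq R (a @ b) (a' @ b')"
proof -
  assume 1: "pres_eq R a a'" and 2: "pres_eq R b b'"
  have "pres_eq R ([] @ a @ b) ([] @ a' @ b)" by (rule pres_eq_ctx[OF 1])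
  moreover have "pres_eq R (a' @ b @ []) (a' @ b' @ [])" by (rule pres_eq_ctx[OF 2])
  ultimately show ?thesis by (metis pres_eq.trans append_Nil append_Nil2)
qed

lemma pres_eq_relI: "(l, r) \<in> R \<Longrightarrow> pres_eq R l r"
  using pres_eq.rel[of l r R "[]" "[]"] by simp

lemma inv_letter_inv[simp]: "inv_letter (inv_letter x) = x"
  by (simp add: inv_letter_def)

lemma inv_word_inv[simp]: "inv_word (inv_word w) = w"
  by (simp add: inv_word_def rev_map comp_def)

lemma inv_word_append[simp]: "inv_word (a @ b) = inv_word b @ inv_word a"
  by (simp add: inv_word_def)

lemma inv_word_Nil[simp]: "inv_word [] = []" by (simp add: inv_word_def)

lemma inv_word_Cons[simp]: "inv_word (x # w) = inv_word w @ [inv_letter x]"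
  by (simp add: inv_word_def)

lemma cancel_right: "pres_eq R (w @ inv_word w) []"
proof (induction w)
  case Nil then show ?case by (simp add: pres_eq.refl)
next
  case (Cons x w)
  have "pres_eq R ([x] @ (w @ inv_word w) @ [inv_letter x]) ([x] @ [] @ [inv_letter x])"
    by (rule pres_eq_ctx[OF Cons.IH])
  moreover have "pres_eq R ([] @ [x, inv_letter x] @ []) ([] @ [])" by (rule pres_eq.cancel)
  ultimately show ?case by (auto intro: pres_eq.trans)
qed

lemma cancel_left: "pres_eq R (inv_word w @ w) []"
  using cancel_right[of R "inv_word w"] by simp

lemma pres_eq_inv: "pres_eq R a b \<Longrightarrow> pres_eq R (inv_word a) (inv_word b)"
proof -
  assume h: "pres_eq R a b"
  have "pres_eq R (inv_word a @ [] ) (inv_word a @ (b @ inv_word b))"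
    by (rule pres_eq_app[OF pres_eq.refl pres_eq.sym[OF cancel_right]])
  moreover have "pres_eq R ((inv_word a @ b) @ inv_word b) ((inv_word a @ a) @ inv_word b)"
    by (rule pres_eq_app[OF pres_eq_app[OF pres_eq.refl pres_eq.sym[OF h]] pres_eq.refl])
  moreover have "pres_eq R ((inv_word a @ a) @ inv_word b) ([] @ inv_word b)"
    by (rule pres_eq_app[OF cancel_left pres_eq.refl])
  ultimately show ?thesis by (auto intro: pres_eq.trans)
qed

lemma subst_word_append[simp]: "subst_word f (a @ b) = subst_word f a @ subst_word f b"
  by (simp add: subst_word_def)

lemma subst_word_Nil[simp]: "subst_word f [] = []"
  by (simp add: subst_word_def)

lemma subst_word_Cons: "subst_word f (x # w) =
   (if snd x then f (fst x) else inv_word (f (fst x))) @ subst_word f w"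
  by (simp add: subst_word_def)

definition resp_rel :: "('a word \<times> 'a word) set \<Rightarrow> ('b word \<times> 'b word) set \<Rightarrow> ('a \<Rightarrow> 'b word) \<Rightarrow> bool" where
  "resp_rel R R' f \<longleftrightarrow> (\<forall>(l, r) \<in> R. pres_eq R' (subst_word f l) (subst_word f r))"

lemma subst_pres:
  assumes "resp_rel R R' f"
  shows "pres_eq R w w' \<Longrightarrow> pres_eq R' (subst_word f w) (subst_word f w')"
proof (induction rule: pres_eq.induct)
  case (refl w) then show ?case by (rule pres_eq.refl)
next
  case (sym a w) then show ?case by (blast intro: pres_eq.sym)
next
  case (trans a w z) then show ?case by (metis pres_eq.trans)
next
  case (cancel u x v)
  have m: "pres_eq R' (subst_word f [x, inv_letter x]) []"
    using cancel_right[of R' "f (fst x)"] cancel_left[of R' "f (fst x)"]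
    by (cases x) (auto simp: subst_word_Cons inv_letter_def)
  have "pres_eq R' (subst_word f u @ subst_word f [x, inv_letter x] @ subst_word f v)
          (subst_word f u @ [] @ subst_word f v)" by (rule pres_eq_ctx[OF m])
  then show ?case by (simp add: subst_word_def)
next
  case (rel l r u v)
  have "pres_eq R' (subst_word f l) (subst_word f r)" using assms rel unfolding resp_rel_def by auto
  then have "pres_eq R' (subst_word f u @ subst_word f l @ subst_word f v)
          (subst_word f u @ subst_word f r @ subst_word f v)" by (rule pres_eq_ctx)
  then show ?case by simp
qed

lemma pres_class_eq: "pres_eq R a b \<Longrightarrow> pres_class R a = pres_class R b"
  unfolding pres_class_def by (auto intro: pres_eq.trans pres_eq.sym)

lemma induced_class:
  assumes "resp_rel R R' f"
  shows "induced_map R' f (pres_class R w) = pres_class R' (subst_word f w)"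
  unfolding induced_map_def pres_class_def
  using subst_pres[OF assms] by (auto intro: pres_eq.trans pres_eq.refl)

lemma mult_class: "mult (pres_group S R) (pres_class R a) (pres_class R b) = pres_class R (a @ b)"
  unfolding pres_group_def pres_class_def
  by (auto intro: pres_eq.trans pres_eq.sym pres_eq.refl pres_eq_app)

lemma carrier_pres: "carrier (pres_group S R) = {pres_class R w | w. fst ` set w \<subseteq> S}"
  by (simp add: pres_group_def)

lemma subst_gens:
  assumes "\<forall>g\<in>S. fst ` set (f g) \<subseteq> S'" "fst ` set w \<subseteq> S"
  shows "fst ` set (subst_word f w) \<subseteq> S'"
  using assms(2)
proof (induction w)
  case Nil then show ?case by simp
next
  case (Cons x w)
  have "fst ` set (inv_word (f (fst x))) = fst ` set (f (fst x))"
    by (force simp: inv_word_def inv_letter_def)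
  moreover have "fst ` set (f (fst x)) \<subseteq> S'" using Cons.prems assms(1) by auto
  ultimately show ?case using Cons by (auto simp: subst_word_Cons)
qed

lemma induced_hom:
  assumes "resp_rel R R' f" "\<forall>g\<in>S. fst ` set (f g) \<subseteq> S'"
  shows "induced_map R' f \<in> hom (pres_group S R) (pres_group S' R')"
proof -
  have "induced_map R' f \<in> carrier (pres_group S R) \<rightarrow> carrier (pres_group S' R')"
    using subst_gens[OF assms(2)] by (fastforce simp: carrier_pres induced_class[OF assms(1)])
  moreover have "induced_map R' f (x \<otimes>\<^bsub>pres_group S R\<^esub> y) =
     induced_map R' f x \<otimes>\<^bsub>pres_group S' R'\<^esub> induced_map R' f y"
    if "x \<in> carrier (pres_group S R)" "y \<in> carrier (pres_group S R)" for x y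
    using that by (auto simp: carrier_pres induced_class[OF assms(1)] mult_class)
  ultimately show ?thesis by (auto simp: hom_def)
qed

lemma subst_id_on:
  assumes "\<forall>g\<in>fst ` set w. pres_eq R (f g) [(g, True)]"
  shows "pres_eq R (subst_word f w) w"
  using assms
proof (induction w)
  case Nil then show ?case by (simp add: pres_eq.refl)
next
  case (Cons x w)
  obtain g s where x: "x = (g, s)" by (cases x)
  have h: "pres_eq R (f g) [(g, True)]" using Cons.prems x by auto
  have "pres_eq R (if s then f g else inv_word (f g)) [x]"
    using h pres_eq_inv[OF h] x by (auto simp: inv_letter_def)
  moreover have "pres_eq R (subst_word f w) w" using Cons by auto
  ultimately have "pres_eq R ((if s then f g else inv_word (f g)) @ subst_word f w) ([x] @ w)"
    by (rule pres_eq_app)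
  then show ?case using x by (cases s) (simp_all add: subst_word_Cons)
qed



lemma pw_append[simp]: "pw (a @ b) = pw a @ pw b" by (simp add: pw_def)
lemma pw_Nil[simp]: "pw [] = []" by (simp add: pw_def)

definition weq :: "(gen word \<times> gen word) set \<Rightarrow> gen list \<Rightarrow> gen list \<Rightarrow> bool" where
  "weq R a b \<longleftrightarrow> pres_eq R (pw a) (pw b)"

lemma weq_refl[simp, intro]: "weq R a a" by (simp add: weq_def pres_eq.refl)
lemma weq_sym: "weq R a b \<Longrightarrow> weq R b a" by (simp add: weq_def pres_eq.sym)
lemma weq_trans[trans]: "weq R a b \<Longrightarrow> weq R b c \<Longrightarrow> weq R a c"
  unfolding weq_def by (rule pres_eq.trans)
lemma weq_app: "weq R a a' \<Longrightarrow> weq R b b' \<Longrightarrow> weq R (a @ b) (a' @ b')"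
  unfolding weq_def by (simp add: pres_eq_app)
lemma weq_ctx: "weq R a b \<Longrightarrow> weq R (u @ a @ v) (u @ b @ v)"
  by (intro weq_app weq_refl)
lemma weq_ctxL: "weq R a b \<Longrightarrow> weq R (u @ a) (u @ b)"
  by (intro weq_app weq_refl)
lemma weq_ctxR: "weq R a b \<Longrightarrow> weq R (a @ v) (b @ v)"
  by (intro weq_app weq_refl)
lemma weq_rel: "(pw a, pw b) \<in> R \<Longrightarrow> weq R a b"
  by (simp add: weq_def pres_eq_relI)

definition sw :: "nat \<Rightarrow> nat \<Rightarrow> nat" where
  "sw j k = (if k = j then j + 1 else if k = j + 1 then j else k)"

fun vperm :: "nat list \<Rightarrow> nat \<Rightarrow> nat" where
  "vperm [] x = x"
| "vperm (j # w) x = sw j (vperm w x)"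

lemma sw_sw[simp]: "sw j (sw j x) = x" by (simp add: sw_def)
lemma sw_inj: "sw j x = sw j y \<Longrightarrow> x = y" by (metis sw_sw)

lemma vperm_append[simp]: "vperm (u @ w) x = vperm u (vperm w x)"
  by (induction u) auto

lemma vperm_rev_inv[simp]: "vperm (rev w) (vperm w x) = x"
  by (induction w arbitrary: x) auto

lemma vperm_rev_inv2[simp]: "vperm w (vperm (rev w) x) = x"
  using vperm_rev_inv[of "rev w" x] by simp

lemma vperm_inj: "vperm w x = vperm w y \<Longrightarrow> x = y"
  by (metis vperm_rev_inv)

lemma vperm_fix: "(\<forall>j\<in>set w. x < j) \<Longrightarrow> vperm w x = x"
  by (induction w) (auto simp: sw_def)

definition vw :: "nat list \<Rightarrow> gen list" where "vw w = map V w"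
definition cnj :: "nat list \<Rightarrow> gen list \<Rightarrow> gen list" where
  "cnj w x = vw w @ x @ vw (rev w)"
definition dn :: "nat \<Rightarrow> nat \<Rightarrow> nat list" where "dn m s = rev [s..<m+1]"
definition Tw :: "nat \<Rightarrow> nat \<Rightarrow> gen list \<Rightarrow> gen list" where
  "Tw s k y = cnj (dn (k - 1) s) y"
definition bp :: "nat \<Rightarrow> nat \<Rightarrow> nat" where "bp a b = (if b < a then b + 1 else b)"
definition qw :: "nat \<Rightarrow> nat \<Rightarrow> nat \<Rightarrow> nat list" where
  "qw s a b = dn (a - 1) s @ dn (bp a b - 1) (s + 1)"
definition cp :: "nat \<Rightarrow> nat \<Rightarrow> gen list" where
  "cp a b = Tw 1 a (Tw 2 (bp a b) [C 1])"
definition bk :: "nat \<Rightarrow> gen list" where "bk k = Tw 1 k [B 1]"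

lemma vw_append[simp]: "vw (a @ b) = vw a @ vw b" by (simp add: vw_def)
lemma vw_Nil[simp]: "vw [] = []" by (simp add: vw_def)
lemma vw_Cons[simp]: "vw (j # w) = V j # vw w" by (simp add: vw_def)

lemma cnj_Nil[simp]: "cnj [] x = x" by (simp add: cnj_def)
lemma cnj_Cons: "cnj (j # w) x = [V j] @ cnj w x @ [V j]" by (simp add: cnj_def)
lemma cnj_cnj: "cnj u (cnj w x) = cnj (u @ w) x" by (simp add: cnj_def)

lemma dn_Suc: "s \<le> k \<Longrightarrow> 1 \<le> k \<Longrightarrow> dn k s = k # dn (k - 1) s"
  unfolding dn_def by (cases k) auto

lemma dn_empty: "m < s \<Longrightarrow> dn m s = []" "dn m s = [] \<longleftrightarrow> m < s"
  unfolding dn_def by auto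

lemma set_dn[simp]: "set (dn m s) = {s..m}" unfolding dn_def by auto

lemma vperm_dn: "s \<le> m + 1 \<Longrightarrow> vperm (dn m s) x =
   (if x = s then m + 1 else if s < x \<and> x \<le> m + 1 then x - 1 else x)"
proof (induction m arbitrary: x)
  case 0
  then show ?case by (cases s) (auto simp: dn_def sw_def)
next
  case (Suc m)
  show ?case
  proof (cases "s \<le> Suc m")
    case True
    then have "dn (Suc m) s = Suc m # dn m s" using dn_Suc by simp
    moreover have "s \<le> m + 1" using True by simp
    ultimately show ?thesis using Suc.IH by (auto simp: sw_def)
  next
    case False
    then have "dn (Suc m) s = []" by (simp add: dn_def)
    then show ?thesis using False Suc.prems by auto
  qed
qed



locale vsys =
  fixes R :: "(gen word \<times> gen word) set" and n :: nat
  assumes vv: "1 \<le> i \<Longrightarrow> i \<le> n - 1 \<Longrightarrow> weq R [V i, V i] []"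
  and vc: "1 \<le> i \<Longrightarrow> j \<le> n - 1 \<Longrightarrow> i + 2 \<le> j \<Longrightarrow> weq R [V i, V j] [V j, V i]"
  and vb: "1 \<le> i \<Longrightarrow> i + 1 \<le> n - 1 \<Longrightarrow> weq R [V i, V (i+1), V i] [V (i+1), V i, V (i+1)]"
  and cv: "3 \<le> j \<Longrightarrow> j \<le> n - 1 \<Longrightarrow> weq R [C 1, V j] [V j, C 1]"
  and bv: "2 \<le> j \<Longrightarrow> j \<le> n - 1 \<Longrightarrow> weq R [B 1, V j] [V j, B 1]"
begin

abbreviation E (infix "\<simeq>" 50) where "a \<simeq> b \<equiv> weq R a b"

definition valid :: "nat list \<Rightarrow> bool" where
  "valid w \<longleftrightarrow> (\<forall>j\<in>set w. 1 \<le> j \<and> j \<le> n - 1)"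

lemma valid_simps[simp]: "valid [] = True" "valid (j # w) \<longleftrightarrow> 1 \<le> j \<and> j \<le> n - 1 \<and> valid w"
  "valid (u @ w) \<longleftrightarrow> valid u \<and> valid w" "valid (rev w) = valid w"
  by (auto simp: valid_def)

lemma valid_dn: "1 \<le> s \<Longrightarrow> m \<le> n - 1 \<Longrightarrow> valid (dn m s)"
  by (auto simp: valid_def)

lemma vcancel: "valid w \<Longrightarrow> vw w @ vw (rev w) \<simeq> []"
proof (induction w)
  case Nil then show ?case by simp
next
  case (Cons j w)
  have "vw (j # w) @ vw (rev (j # w)) = [V j] @ (vw w @ vw (rev w)) @ [V j]" by simp
  also have "\<dots> \<simeq> [V j] @ [] @ [V j]" using Cons by (intro weq_ctx) auto
  also have "\<dots> \<simeq> []" using Cons.prems vv by simp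
  finally show ?case .
qed

lemma vcancel': "valid w \<Longrightarrow> vw (rev w) @ vw w \<simeq> []"
  using vcancel[of "rev w"] by simp

lemma cnj_cong: "x \<simeq> y \<Longrightarrow> cnj w x \<simeq> cnj w y"
  unfolding cnj_def by (rule weq_ctx)

lemma cnj_app: "valid w \<Longrightarrow> cnj w (x @ y) \<simeq> cnj w x @ cnj w y"
proof -
  assume v: "valid w"
  have "cnj w x @ cnj w y = vw w @ x @ (vw (rev w) @ vw w) @ y @ vw (rev w)"
    by (simp add: cnj_def)
  also have "\<dots> \<simeq> vw w @ x @ [] @ y @ vw (rev w)"
    by (intro weq_ctx[where u="vw w @ x", simplified] vcancel' v)
  finally show ?thesis by (simp add: cnj_def weq_sym)
qed

lemma cnj_app3: "valid w \<Longrightarrow> cnj w (x @ y @ z) \<simeq> cnj w x @ cnj w y @ cnj w z"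
  by (meson cnj_app weq_app weq_refl weq_trans)

lemma cnj_emp: "valid w \<Longrightarrow> cnj w [] \<simeq> []"
  unfolding cnj_def using vcancel by simp

lemma cnj_rev: "valid w \<Longrightarrow> cnj (rev w) (cnj w x) \<simeq> x"
proof -
  assume v: "valid w"
  have "cnj (rev w) (cnj w x) = (vw (rev w) @ vw w) @ x @ (vw (rev w) @ vw w)"
    by (simp add: cnj_def)
  also have "\<dots> \<simeq> [] @ x @ []" using vcancel'[OF v] by (intro weq_app weq_refl)
  finally show ?thesis by simp
qed

lemma cnj_rev2: "valid w \<Longrightarrow> cnj w (cnj (rev w) x) \<simeq> x"
  using cnj_rev[of "rev w"] by simp

lemma vinv: "valid a \<Longrightarrow> valid b \<Longrightarrow> vw a \<simeq> vw b \<Longrightarrow> vw (rev a) \<simeq> vw (rev b)"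
proof -
  assume va: "valid a" and vb': "valid b" and h: "vw a \<simeq> vw b"
  have "vw (rev a) \<simeq> vw (rev a) @ (vw b @ vw (rev b))"
    using vcancel[OF vb'] weq_ctxL[of R "vw b @ vw (rev b)" "[]" "vw (rev a)"] by (simp add: weq_sym)
  also have "\<dots> \<simeq> vw (rev a) @ (vw a @ vw (rev b))"
    by (intro weq_ctxL weq_ctxR weq_sym[OF h])
  also have "\<dots> = (vw (rev a) @ vw a) @ vw (rev b)" by simp
  also have "\<dots> \<simeq> [] @ vw (rev b)" by (intro weq_ctxR vcancel'[OF va])
  finally show ?thesis by simp
qed

lemma sandwich: "1 \<le> j \<Longrightarrow> j \<le> n - 1 \<Longrightarrow> [V j] @ x @ [V j] \<simeq> y \<Longrightarrow> x @ [V j] \<simeq> [V j] @ y"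
proof -
  assume j: "1 \<le> j" "j \<le> n - 1" and h: "[V j] @ x @ [V j] \<simeq> y"
  have "x @ [V j] \<simeq> [V j, V j] @ x @ [V j]"
    using vv[OF j] weq_ctxR[of R "[V j, V j]" "[]" "x @ [V j]"] by (simp add: weq_sym)
  also have "\<dots> = [V j] @ ([V j] @ x @ [V j])" by simp
  also have "\<dots> \<simeq> [V j] @ y" by (rule weq_ctxL[OF h])
  finally show ?thesis .
qed

lemma unsandwich: "1 \<le> j \<Longrightarrow> j \<le> n - 1 \<Longrightarrow> x @ [V j] \<simeq> [V j] @ x \<Longrightarrow> [V j] @ x @ [V j] \<simeq> x"
proof -
  assume j: "1 \<le> j" "j \<le> n - 1" and h: "x @ [V j] \<simeq> [V j] @ x"
  have "[V j] @ x @ [V j] \<simeq> [V j] @ [V j] @ x" by (rule weq_ctxL[OF h])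
  also have "\<dots> = [V j, V j] @ x" by simp
  also have "\<dots> \<simeq> [] @ x" by (rule weq_ctxR[OF vv[OF j]])
  finally show ?thesis by simp
qed

lemma vcomm_word: "valid [j] \<Longrightarrow> valid w \<Longrightarrow> (\<forall>i\<in>set w. i + 2 \<le> j \<or> j + 2 \<le> i) \<Longrightarrow>
  [V j] @ vw w \<simeq> vw w @ [V j]"
proof (induction w)
  case Nil then show ?case by simp
next
  case (Cons i w)
  have c: "[V j, V i] \<simeq> [V i, V j]" using Cons.prems vc[of j i] vc[of i j]
    by (auto intro: weq_sym)
  have "[V j] @ vw (i # w) = [V j, V i] @ vw w" by simp
  also have "\<dots> \<simeq> [V i, V j] @ vw w" by (rule weq_ctxR[OF c])
  also have "\<dots> = [V i] @ ([V j] @ vw w)" by simp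
  also have "\<dots> \<simeq> [V i] @ (vw w @ [V j])" using Cons by (intro weq_ctxL) auto
  finally show ?case by simp
qed

lemma shift: "1 \<le> s \<Longrightarrow> s \<le> j \<Longrightarrow> j < m \<Longrightarrow> m \<le> n - 1 \<Longrightarrow>
  [V j] @ vw (dn m s) \<simeq> vw (dn m s) @ [V (j+1)]"
proof (induction m)
  case 0 then show ?case by simp
next
  case (Suc m)
  have ds: "dn (Suc m) s = Suc m # dn m s" using Suc.prems dn_Suc by simp
  show ?case
  proof (cases "j < m")
    case True
    have c: "[V j, V (Suc m)] \<simeq> [V (Suc m), V j]" using Suc.prems True vc by auto
    have "[V j] @ vw (dn (Suc m) s) = [V j, V (Suc m)] @ vw (dn m s)" using ds by simp
    also have "\<dots> \<simeq> [V (Suc m), V j] @ vw (dn m s)" by (rule weq_ctxR[OF c])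
    also have "\<dots> = [V (Suc m)] @ ([V j] @ vw (dn m s))" by simp
    also have "\<dots> \<simeq> [V (Suc m)] @ (vw (dn m s) @ [V (j+1)])"
      using Suc True by (intro weq_ctxL) auto
    finally show ?thesis using ds by simp
  next
    case False
    then have jm: "j = m" using Suc.prems by simp
    have d2: "dn m s = j # dn (j - 1) s" using dn_Suc Suc.prems jm by simp
    have "[V j] @ vw (dn (Suc m) s) = [V j, V (j+1), V j] @ vw (dn (j - 1) s)"
      using ds d2 jm by simp
    also have "\<dots> \<simeq> [V (j+1), V j, V (j+1)] @ vw (dn (j - 1) s)"
      using Suc.prems jm by (intro weq_ctxR vb) auto
    also have "\<dots> = [V (j+1), V j] @ ([V (j+1)] @ vw (dn (j - 1) s))" by simp
    also have "\<dots> \<simeq> [V (j+1), V j] @ (vw (dn (j - 1) s) @ [V (j+1)])"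
      using Suc.prems jm by (intro weq_ctxL vcomm_word) (auto simp: valid_def)
    finally show ?thesis using ds d2 jm by simp
  qed
qed

lemma shift_r: "1 \<le> s \<Longrightarrow> s \<le> j \<Longrightarrow> j < m \<Longrightarrow> m \<le> n - 1 \<Longrightarrow>
  vw (rev (dn m s)) @ [V j] \<simeq> [V (j+1)] @ vw (rev (dn m s))"
  using vinv[of "j # dn m s" "dn m s @ [j+1]"] shift[of s j m] by (simp add: valid_def)

lemma vcomm_word_r: "valid [j] \<Longrightarrow> valid w \<Longrightarrow> (\<forall>i\<in>set w. i + 2 \<le> j \<or> j + 2 \<le> i) \<Longrightarrow>
  vw w @ [V j] \<simeq> [V j] @ vw w"
  by (rule weq_sym, rule vcomm_word) auto

end


context vsys begin

lemma L1: "1 \<le> s \<Longrightarrow> s \<le> k \<Longrightarrow> [V k] @ Tw s k y @ [V k] = Tw s (k+1) y"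
  by (simp add: Tw_def dn_Suc cnj_Cons)

lemma L2: "1 \<le> s \<Longrightarrow> s \<le> j \<Longrightarrow> j \<le> n - 1 \<Longrightarrow> [V j] @ Tw s (j+1) y @ [V j] \<simeq> Tw s j y"
proof -
  assume a: "1 \<le> s" "s \<le> j" "j \<le> n - 1"
  have "[V j] @ Tw s (j+1) y @ [V j] = [V j, V j] @ Tw s j y @ [V j, V j]"
    using L1[OF a(1,2), of y, symmetric] by simp
  also have "\<dots> \<simeq> [] @ Tw s j y @ []" using a vv[of j] by (intro weq_app weq_refl) auto
  finally show ?thesis by simp
qed

lemma L3: "1 \<le> s \<Longrightarrow> s \<le> j \<Longrightarrow> j + 1 < k \<Longrightarrow> k \<le> n \<Longrightarrow>
   [V j] @ Tw s k y @ [V j] \<simeq> Tw s k ([V (j+1)] @ y @ [V (j+1)])"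
proof -
  assume a: "1 \<le> s" "s \<le> j" "j + 1 < k" "k \<le> n"
  let ?D = "dn (k - 1) s"
  have "[V j] @ Tw s k y @ [V j] = ([V j] @ vw ?D) @ y @ (vw (rev ?D) @ [V j])"
    by (simp add: Tw_def cnj_def)
  also have "\<dots> \<simeq> (vw ?D @ [V (j+1)]) @ y @ ([V (j+1)] @ vw (rev ?D))"
    using a by (intro weq_app weq_refl shift shift_r) auto
  finally show ?thesis by (simp add: Tw_def cnj_def)
qed

lemma L4: "1 \<le> s \<Longrightarrow> k < j \<Longrightarrow> j \<le> n - 1 \<Longrightarrow>
   [V j] @ Tw s k y @ [V j] \<simeq> Tw s k ([V j] @ y @ [V j])"
proof -
  assume a: "1 \<le> s" "k < j" "j \<le> n - 1"
  let ?D = "dn (k - 1) s"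
  have vD: "valid ?D" using a by (intro valid_dn) auto
  have far: "\<forall>i\<in>set ?D. i + 2 \<le> j \<or> j + 2 \<le> i" using a by auto
  have "[V j] @ Tw s k y @ [V j] = ([V j] @ vw ?D) @ y @ (vw (rev ?D) @ [V j])"
    by (simp add: Tw_def cnj_def)
  also have "\<dots> \<simeq> (vw ?D @ [V j]) @ y @ ([V j] @ vw (rev ?D))"
    using a vD far by (intro weq_app weq_refl vcomm_word vcomm_word_r) auto
  finally show ?thesis by (simp add: Tw_def cnj_def)
qed

lemma Tsingle:
  assumes "1 \<le> s" "s \<le> k" "k \<le> n" "s \<le> j" "j \<le> n - 1"
    and H: "\<And>i. s < i \<Longrightarrow> i \<le> n - 1 \<Longrightarrow> [V i] @ y @ [V i] \<simeq> y"
  shows "[V j] @ Tw s k y @ [V j] \<simeq> Tw s (sw j k) y"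
proof -
  consider "k = j" | "k = j + 1" | "j + 1 < k" | "k < j" by linarith
  then show ?thesis
  proof cases
    case 1 then show ?thesis using assms L1[of s k y] by (simp add: sw_def)
  next
    case 2 then show ?thesis using assms L2[of s j y] by (simp add: sw_def)
  next
    case 3
    have "[V j] @ Tw s k y @ [V j] \<simeq> Tw s k ([V (j+1)] @ y @ [V (j+1)])"
      using assms 3 by (intro L3) auto
    also have "\<dots> \<simeq> Tw s k y" unfolding Tw_def using assms 3 by (intro cnj_cong H) auto
    finally show ?thesis using 3 by (simp add: sw_def)
  next
    case 4
    have "[V j] @ Tw s k y @ [V j] \<simeq> Tw s k ([V j] @ y @ [V j])"
      using assms 4 by (intro L4) auto
    also have "\<dots> \<simeq> Tw s k y" unfolding Tw_def using assms 4 by (intro cnj_cong H) auto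
    finally show ?thesis using 4 by (simp add: sw_def)
  qed
qed

lemma Hb: "1 < i \<Longrightarrow> i \<le> n - 1 \<Longrightarrow> [V i] @ [B 1] @ [V i] \<simeq> [B 1]"
  using bv[of i] by (intro unsandwich) auto

lemma Hc: "2 < i \<Longrightarrow> i \<le> n - 1 \<Longrightarrow> [V i] @ [C 1] @ [V i] \<simeq> [C 1]"
  using cv[of i] by (intro unsandwich) auto

lemma bk_single: "1 \<le> k \<Longrightarrow> k \<le> n \<Longrightarrow> 1 \<le> j \<Longrightarrow> j \<le> n - 1 \<Longrightarrow>
  [V j] @ bk k @ [V j] \<simeq> bk (sw j k)"
  unfolding bk_def apply (rule Tsingle) using Hb by auto

lemma e_single: "2 \<le> k \<Longrightarrow> k \<le> n \<Longrightarrow> 2 \<le> j \<Longrightarrow> j \<le> n - 1 \<Longrightarrow>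
  [V j] @ Tw 2 k [C 1] @ [V j] \<simeq> Tw 2 (sw j k) [C 1]"
  apply (rule Tsingle) using Hc by auto

lemma cp_single:
  assumes ab: "1 \<le> a" "a \<le> n" "1 \<le> b" "b \<le> n" "a \<noteq> b" and j: "1 \<le> j" "j \<le> n - 1"
  shows "[V j] @ cp a b @ [V j] \<simeq> cp (sw j a) (sw j b)"
proof -
  let ?y = "Tw 2 (bp a b) [C 1]"
  have bp2: "2 \<le> bp a b" "bp a b \<le> n" using ab by (auto simp: bp_def)
  consider "a = j" | "a = j + 1" | "j + 1 < a" | "a < j" by linarith
  then show ?thesis
  proof cases
    case 1
    have e: "bp (j+1) (sw j b) = bp a b" using 1 ab by (auto simp: bp_def sw_def)
    show ?thesis using 1 ab L1[of 1 a ?y] e by (simp add: cp_def sw_def)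
  next
    case 2
    have e: "bp j (sw j b) = bp a b" using 2 ab by (auto simp: bp_def sw_def)
    show ?thesis using 2 ab j L2[of 1 j ?y] e by (simp add: cp_def sw_def)
  next
    case 3
    have e: "bp a (sw j b) = sw (j+1) (bp a b)" using 3 ab by (auto simp: bp_def sw_def)
    have "[V j] @ cp a b @ [V j] \<simeq> Tw 1 a ([V (j+1)] @ ?y @ [V (j+1)])"
      unfolding cp_def using 3 ab j by (intro L3) auto
    also have "\<dots> \<simeq> Tw 1 a (Tw 2 (sw (j+1) (bp a b)) [C 1])"
      unfolding Tw_def[of 1] using 3 ab j bp2 by (intro cnj_cong e_single) auto
    finally show ?thesis using 3 e by (simp add: cp_def sw_def)
  next
    case 4
    have e: "bp a (sw j b) = sw j (bp a b)" using 4 ab by (auto simp: bp_def sw_def)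
    have "[V j] @ cp a b @ [V j] \<simeq> Tw 1 a ([V j] @ ?y @ [V j])"
      unfolding cp_def using 4 ab j by (intro L4) auto
    also have "\<dots> \<simeq> Tw 1 a (Tw 2 (sw j (bp a b)) [C 1])"
      unfolding Tw_def[of 1] using 4 ab j bp2 by (intro cnj_cong e_single) auto
    finally show ?thesis using 4 e by (simp add: cp_def sw_def)
  qed
qed

lemma vperm_range: "valid w \<Longrightarrow> 1 \<le> k \<Longrightarrow> k \<le> n \<Longrightarrow> 1 \<le> vperm w k \<and> vperm w k \<le> n"
  by (induction w) (auto simp: sw_def)

lemma act_b: "valid w \<Longrightarrow> 1 \<le> k \<Longrightarrow> k \<le> n \<Longrightarrow> cnj w (bk k) \<simeq> bk (vperm w k)"
proof (induction w)
  case Nil then show ?case by simp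
next
  case (Cons j w)
  have "cnj (j # w) (bk k) = [V j] @ cnj w (bk k) @ [V j]" by (simp add: cnj_Cons)
  also have "\<dots> \<simeq> [V j] @ bk (vperm w k) @ [V j]" using Cons by (intro weq_ctx) auto
  also have "\<dots> \<simeq> bk (vperm (j # w) k)"
    using Cons.prems vperm_range[of w k] bk_single[of "vperm w k" j] by simp
  finally show ?case .
qed

lemma act_c: "valid w \<Longrightarrow> 1 \<le> a \<Longrightarrow> a \<le> n \<Longrightarrow> 1 \<le> b \<Longrightarrow> b \<le> n \<Longrightarrow> a \<noteq> b \<Longrightarrow>
   cnj w (cp a b) \<simeq> cp (vperm w a) (vperm w b)"
proof (induction w)
  case Nil then show ?case by simp
next
  case (Cons j w)
  have "cnj (j # w) (cp a b) = [V j] @ cnj w (cp a b) @ [V j]" by (simp add: cnj_Cons)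
  also have "\<dots> \<simeq> [V j] @ cp (vperm w a) (vperm w b) @ [V j]" using Cons by (intro weq_ctx) auto
  also have "\<dots> \<simeq> cp (vperm (j # w) a) (vperm (j # w) b)"
    using Cons.prems vperm_range[of w a] vperm_range[of w b] vperm_inj[of w a b]
      cp_single[of "vperm w a" "vperm w b" j] by auto
  finally show ?case .
qed

lemma bk1: "bk 1 = [B 1]" by (simp add: bk_def Tw_def dn_def)
lemma cp12: "cp 1 2 = [C 1]" by (simp add: cp_def Tw_def dn_def bp_def)
lemma cp_qw: "cp a b = cnj (qw 1 a b) [C 1]"
  by (simp add: cp_def Tw_def qw_def cnj_cnj numeral_2_eq_2)
lemma bk_dn: "bk k = cnj (dn (k - 1) 1) [B 1]" by (simp add: bk_def Tw_def)

lemma act_b1: "valid w \<Longrightarrow> 1 \<le> n \<Longrightarrow> cnj w [B 1] \<simeq> bk (vperm w 1)"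
proof -
  assume "valid w" "1 \<le> n"
  then have "cnj w (bk 1) \<simeq> bk (vperm w 1)" by (intro act_b) auto
  then show ?thesis by (simp only: bk1)
qed
lemma act_c1: "valid w \<Longrightarrow> 2 \<le> n \<Longrightarrow> cnj w [C 1] \<simeq> cp (vperm w 1) (vperm w 2)"
proof -
  assume "valid w" "2 \<le> n"
  then have "cnj w (cp 1 2) \<simeq> cp (vperm w 1) (vperm w 2)" by (intro act_c) auto
  then show ?thesis by (simp only: cp12)
qed

lemma qw_props:
  assumes "1 \<le> s" "s \<le> a" "a \<le> n" "s \<le> b" "b \<le> n" "a \<noteq> b"
  shows "valid (qw s a b)" "vperm (qw s a b) s = a" "vperm (qw s a b) (s+1) = b"
    "\<And>x. x < s \<Longrightarrow> vperm (qw s a b) x = x"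
proof -
  have b1: "s + 1 \<le> bp a b" "bp a b \<le> n" using assms by (auto simp: bp_def)
  show "valid (qw s a b)" using assms b1 by (auto simp: qw_def valid_def)
  show "vperm (qw s a b) s = a" using assms b1 by (auto simp: qw_def vperm_dn)
  show "vperm (qw s a b) (s+1) = b" using assms b1 by (auto simp: qw_def vperm_dn bp_def)
  show "\<And>x. x < s \<Longrightarrow> vperm (qw s a b) x = x" using assms b1
    by (auto simp: qw_def vperm_dn)
qed

end


context vsys begin

lemma comm_transport:
  assumes "valid w" "x @ y \<simeq> y @ x" "cnj w x \<simeq> x'" "cnj w y \<simeq> y'"
  shows "x' @ y' \<simeq> y' @ x'"
proof -
  have "x' @ y' \<simeq> cnj w x @ cnj w y" using weq_app[OF weq_sym[OF assms(3)] weq_sym[OF assms(4)]] .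
  also have "\<dots> \<simeq> cnj w (x @ y)" using weq_sym[OF cnj_app[OF assms(1)]] .
  also have "\<dots> \<simeq> cnj w (y @ x)" using assms by (intro cnj_cong)
  also have "\<dots> \<simeq> cnj w y @ cnj w x" using assms by (intro cnj_app)
  also have "\<dots> \<simeq> y' @ x'" using assms by (intro weq_app)
  finally show ?thesis .
qed

lemma braid_transport:
  assumes "valid w" "x @ y @ x \<simeq> y @ x @ y" "cnj w x \<simeq> x'" "cnj w y \<simeq> y'"
  shows "x' @ y' @ x' \<simeq> y' @ x' @ y'"
proof -
  have "x' @ y' @ x' \<simeq> cnj w x @ cnj w y @ cnj w x"
    using weq_app[OF weq_sym[OF assms(3)] weq_app[OF weq_sym[OF assms(4)] weq_sym[OF assms(3)]]] .
  also have "\<dots> \<simeq> cnj w (x @ y @ x)" using weq_sym[OF cnj_app3[OF assms(1)]] .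
  also have "\<dots> \<simeq> cnj w (y @ x @ y)" using assms by (intro cnj_cong)
  also have "\<dots> \<simeq> cnj w y @ cnj w x @ cnj w y" using assms by (intro cnj_app3)
  also have "\<dots> \<simeq> y' @ x' @ y'" using assms by (intro weq_app)
  finally show ?thesis .
qed

lemma bk_single': "1 \<le> k \<Longrightarrow> k \<le> n \<Longrightarrow> 1 \<le> j \<Longrightarrow> j \<le> n - 1 \<Longrightarrow>
  bk k @ [V j] \<simeq> [V j] @ bk (sw j k)"
  by (intro sandwich bk_single)

lemma cp_single': "1 \<le> a \<Longrightarrow> a \<le> n \<Longrightarrow> 1 \<le> b \<Longrightarrow> b \<le> n \<Longrightarrow> a \<noteq> b \<Longrightarrow> 1 \<le> j \<Longrightarrow> j \<le> n - 1 \<Longrightarrow>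
  cp a b @ [V j] \<simeq> [V j] @ cp (sw j a) (sw j b)"
  by (intro sandwich cp_single)

lemma G_vcv: "1 \<le> i \<Longrightarrow> i + 2 \<le> n \<Longrightarrow>
  [V i] @ cp (i+1) (i+2) @ [V i] \<simeq> [V (i+1)] @ cp i (i+1) @ [V (i+1)]"
proof -
  assume a: "1 \<le> i" "i + 2 \<le> n"
  have "[V i] @ cp (i+1) (i+2) @ [V i] \<simeq> cp (sw i (i+1)) (sw i (i+2))" using a by (intro cp_single) auto
  moreover have "[V (i+1)] @ cp i (i+1) @ [V (i+1)] \<simeq> cp (sw (i+1) i) (sw (i+1) (i+1))"
    using a by (intro cp_single) auto
  ultimately show ?thesis by (simp add: sw_def) (rule weq_trans, assumption, rule weq_sym, assumption)
qed

lemma qw1: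
  assumes "1 \<le> a" "a \<le> n" "1 \<le> b" "b \<le> n" "a \<noteq> b"
  shows "valid (qw 1 a b)" "vperm (qw 1 a b) 1 = a" "vperm (qw 1 a b) 2 = b"
  using qw_props[of 1 a b] assms unfolding one_add_one by simp_all

lemma ne_via: "vperm w a = j \<Longrightarrow> vperm w c = i \<Longrightarrow> i \<noteq> j \<Longrightarrow> a \<noteq> c"
  by auto

lemma bk_range_pw: "1 \<le> k \<Longrightarrow> k \<le> n \<Longrightarrow> valid (dn (k - 1) 1)"
  by (intro valid_dn) auto

end

locale gsys = vsys +
  assumes n4: "4 \<le> n"
  and cc1: "weq R [C 1, C 1] []"
  and bb1: "weq R [B 1, B 1] []"
  and R1: "weq R [V 1, C 1, V 1, V 2, C 1, V 2, V 1, C 1, V 1] [V 2, C 1, V 2, V 1, C 1, V 1, V 2, C 1, V 2]"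
  and R2: "weq R [C 1, V 2, V 3, V 1, V 2, C 1, V 2, V 1, V 3, V 2] [V 2, V 3, V 1, V 2, C 1, V 2, V 1, V 3, V 2, C 1]"
  and R3: "weq R [B 1, V 1, B 1, V 1] [V 1, B 1, V 1, B 1]"
  and R4: "weq R [C 1, V 2, V 1, B 1, V 1, V 2] [V 2, V 1, B 1, V 1, V 2, C 1]"
  and R5: "weq R [V 1, B 1, V 1, B 1, C 1, B 1, V 1, B 1, V 1] [V 1, C 1, V 1]"
begin

lemma sq_transport: "valid w \<Longrightarrow> x @ x \<simeq> [] \<Longrightarrow> cnj w x @ cnj w x \<simeq> []"
proof -
  assume v: "valid w" and h: "x @ x \<simeq> []"
  have "cnj w x @ cnj w x \<simeq> cnj w (x @ x)" by (rule weq_sym[OF cnj_app[OF v]])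
  also have "\<dots> \<simeq> cnj w []" by (rule cnj_cong[OF h])
  also have "\<dots> \<simeq> []" by (rule cnj_emp[OF v])
  finally show ?thesis .
qed

lemma G_b2: "1 \<le> i \<Longrightarrow> i \<le> n \<Longrightarrow> bk i @ bk i \<simeq> []"
  unfolding bk_dn using bb1 by (intro sq_transport valid_dn) auto

lemma G_c2: "1 \<le> i \<Longrightarrow> i + 1 \<le> n \<Longrightarrow> cp i (i+1) @ cp i (i+1) \<simeq> []"
  unfolding cp_qw using cc1 by (intro sq_transport qw_props) auto

lemma bk2: "bk 2 = [V 1, B 1, V 1]" by (simp add: bk_def Tw_def dn_def cnj_def)
lemma bk3: "bk 3 = [V 2, V 1, B 1, V 1, V 2]"
  by (simp add: bk_def Tw_def dn_def cnj_def numeral_3_eq_3 numeral_2_eq_2)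

lemma base_bb: "2 \<le> a \<Longrightarrow> a \<le> n \<Longrightarrow> [B 1] @ bk a \<simeq> bk a @ [B 1]"
proof -
  assume a: "2 \<le> a" "a \<le> n"
  let ?q = "dn (a - 1) 2"
  have vq: "valid ?q" using a by (intro valid_dn) auto
  have p1: "vperm ?q 1 = 1" by (rule vperm_fix) auto
  have p2: "vperm ?q 2 = a" using a by (simp add: vperm_dn)
  have "cnj ?q [B 1] \<simeq> bk 1" using act_b1[OF vq] p1 a by simp
  then have h1: "cnj ?q [B 1] \<simeq> [B 1]" by (simp only: bk1)
  have h2: "cnj ?q (bk 2) \<simeq> bk a" using act_b[OF vq, of 2] a p2 by simp
  have r: "[B 1] @ bk 2 \<simeq> bk 2 @ [B 1]" using R3 by (simp add: bk2)
  show ?thesis by (rule comm_transport[OF vq r h1 h2])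
qed

lemma G_bb: "1 \<le> i \<Longrightarrow> i \<le> n \<Longrightarrow> 1 \<le> j \<Longrightarrow> j \<le> n \<Longrightarrow> i \<noteq> j \<Longrightarrow> bk i @ bk j \<simeq> bk j @ bk i"
proof -
  assume a: "1 \<le> i" "i \<le> n" "1 \<le> j" "j \<le> n" "i \<noteq> j"
  let ?w = "dn (i - 1) 1"
  let ?a = "vperm (rev ?w) j"
  have vw': "valid ?w" using a by (intro valid_dn) auto
  have w1: "vperm ?w 1 = i" using a by (simp add: vperm_dn)
  have ar: "1 \<le> ?a \<and> ?a \<le> n" using vperm_range[of "rev ?w" j] vw' a by simp
  have a1: "?a \<noteq> 1" by (rule ne_via[OF vperm_rev_inv2 w1]) (use a in auto)
  have h1: "cnj ?w [B 1] \<simeq> bk i" by (simp add: bk_dn)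
  have h2: "cnj ?w (bk ?a) \<simeq> bk j" using act_b[OF vw', of ?a] ar by simp
  show ?thesis by (rule comm_transport[OF vw' base_bb h1 h2]) (use ar a1 in auto)
qed

lemma base_bc: "3 \<le> a \<Longrightarrow> a \<le> n \<Longrightarrow> [C 1] @ bk a \<simeq> bk a @ [C 1]"
proof -
  assume a: "3 \<le> a" "a \<le> n"
  let ?q = "dn (a - 1) 3"
  have vq: "valid ?q" using a by (intro valid_dn) auto
  have p1: "vperm ?q 1 = 1" "vperm ?q 2 = 2" by (rule vperm_fix, auto)+
  have p3: "vperm ?q 3 = a" using a by (simp add: vperm_dn)
  have "cnj ?q [C 1] \<simeq> cp 1 2" using act_c1[OF vq] p1 a by simp
  then have h1: "cnj ?q [C 1] \<simeq> [C 1]" by (simp only: cp12)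
  have h2: "cnj ?q (bk 3) \<simeq> bk a" using act_b[OF vq, of 3] a p3 by simp
  have r: "[C 1] @ bk 3 \<simeq> bk 3 @ [C 1]" using R4 by (simp add: bk3)
  show ?thesis by (rule comm_transport[OF vq r h1 h2])
qed

lemma G_bc: "1 \<le> i \<Longrightarrow> i \<le> n \<Longrightarrow> 1 \<le> j \<Longrightarrow> j + 1 \<le> n \<Longrightarrow> i \<noteq> j \<Longrightarrow> i \<noteq> j + 1 \<Longrightarrow>
   bk i @ cp j (j+1) \<simeq> cp j (j+1) @ bk i"
proof -
  assume a: "1 \<le> i" "i \<le> n" "1 \<le> j" "j + 1 \<le> n" "i \<noteq> j" "i \<noteq> j + 1"
  let ?w = "qw 1 j (j+1)"
  let ?a = "vperm (rev ?w) i"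
  have vw': "valid ?w" "vperm ?w 1 = j" "vperm ?w 2 = j + 1"
    using qw1[of j "j+1"] a by simp_all
  have ar: "1 \<le> ?a \<and> ?a \<le> n" using vperm_range[of "rev ?w" i] vw' a by simp
  have a1: "?a \<noteq> 1" by (rule ne_via[OF vperm_rev_inv2 vw'(2)]) (use a in simp)
  have a2: "?a \<noteq> 2" by (rule ne_via[OF vperm_rev_inv2 vw'(3)]) (use a in simp)
  have h1: "cnj ?w [C 1] \<simeq> cp j (j+1)" by (simp add: cp_qw)
  have h2: "cnj ?w (bk ?a) \<simeq> bk i" using act_b[OF vw'(1), of ?a] ar by simp
  show ?thesis
    by (rule comm_transport[OF vw'(1) weq_sym[OF base_bc] h2 h1]) (use ar a1 a2 in auto)
qed

lemma base_cc: "3 \<le> a \<Longrightarrow> a \<le> n \<Longrightarrow> 3 \<le> b \<Longrightarrow> b \<le> n \<Longrightarrow> a \<noteq> b \<Longrightarrow>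
   [C 1] @ cp a b \<simeq> cp a b @ [C 1]"
proof -
  assume a: "3 \<le> a" "a \<le> n" "3 \<le> b" "b \<le> n" "a \<noteq> b"
  let ?q = "qw 3 a b"
  have vq1: "valid ?q" by (rule qw_props(1)) (use a in auto)
  have vq2: "vperm ?q 3 = a" by (rule qw_props(2)) (use a in auto)
  have vq3: "vperm ?q 4 = b" using qw_props(3)[of 3 a b] a by simp
  have vq4: "vperm ?q 1 = 1" by (rule qw_props(4)) (use a in auto)
  have vq5: "vperm ?q 2 = 2" by (rule qw_props(4)) (use a in auto)
  note vq = vq1 vq2 vq3 vq4 vq5
  have "cnj ?q [C 1] \<simeq> cp 1 2" using act_c1[OF vq(1)] vq a by simp
  then have h1: "cnj ?q [C 1] \<simeq> [C 1]" by (simp only: cp12)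
  have h2: "cnj ?q (cp 3 4) \<simeq> cp a b" using act_c[OF vq(1), of 3 4] a vq by simp
  let ?Z = "cnj [2, 3, 1, 2] [C 1]"
  have vZ: "valid [2, 3, 1, 2]" using n4 unfolding valid_def by auto
  have e: "vperm [2, 3, 1, 2] 1 = 3" "vperm [2, 3, 1, 2] 2 = 4" by (simp_all add: sw_def)
  have "?Z \<simeq> cp (vperm [2, 3, 1, 2] 1) (vperm [2, 3, 1, 2] 2)" by (rule act_c1[OF vZ]) (use n4 in auto)
  then have Z: "?Z \<simeq> cp 3 4" by (simp only: e)
  have r0: "[C 1] @ ?Z \<simeq> ?Z @ [C 1]" using R2 by (simp add: cnj_def)
  have r: "[C 1] @ cp 3 4 \<simeq> cp 3 4 @ [C 1]"
    by (rule comm_transport[of "[]", OF _ r0]) (use Z in auto)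
  show ?thesis by (rule comm_transport[OF vq(1) r h1 h2])
qed

lemma G_cc: "1 \<le> i \<Longrightarrow> i + 1 \<le> n \<Longrightarrow> 1 \<le> j \<Longrightarrow> j + 1 \<le> n \<Longrightarrow> i + 2 \<le> j \<or> j + 2 \<le> i \<Longrightarrow>
   cp i (i+1) @ cp j (j+1) \<simeq> cp j (j+1) @ cp i (i+1)"
proof -
  assume a: "1 \<le> i" "i + 1 \<le> n" "1 \<le> j" "j + 1 \<le> n" "i + 2 \<le> j \<or> j + 2 \<le> i"
  let ?w = "qw 1 i (i+1)"
  let ?a = "vperm (rev ?w) j" and ?b = "vperm (rev ?w) (j+1)"
  have vw': "valid ?w" "vperm ?w 1 = i" "vperm ?w 2 = i + 1"
    using qw1[of i "i+1"] a by simp_all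
  have ar: "1 \<le> ?a \<and> ?a \<le> n" "1 \<le> ?b \<and> ?b \<le> n"
    using vperm_range[of "rev ?w" j] vperm_range[of "rev ?w" "j+1"] vw' a by simp_all
  have a1: "?a \<noteq> 1" by (rule ne_via[OF vperm_rev_inv2 vw'(2)]) (use a in auto)
  have a2: "?a \<noteq> 2" by (rule ne_via[OF vperm_rev_inv2 vw'(3)]) (use a in auto)
  have a3: "?b \<noteq> 1" by (rule ne_via[OF vperm_rev_inv2 vw'(2)]) (use a in auto)
  have a4: "?b \<noteq> 2" by (rule ne_via[OF vperm_rev_inv2 vw'(3)]) (use a in auto)
  have ab: "?a \<noteq> ?b" using vperm_inj[of "rev ?w" j "j+1"] by auto
  have h1: "cnj ?w [C 1] \<simeq> cp i (i+1)" by (simp add: cp_qw)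
  have h2: "cnj ?w (cp ?a ?b) \<simeq> cp j (j+1)" using act_c[OF vw'(1), of ?a ?b] ar ab by simp
  show ?thesis by (rule comm_transport[OF vw'(1) base_cc h1 h2]) (use ar a1 a2 a3 a4 ab in auto)
qed

lemma G_cbraid: "1 \<le> i \<Longrightarrow> i + 2 \<le> n \<Longrightarrow>
   cp i (i+1) @ cp (i+1) (i+2) @ cp i (i+1) \<simeq> cp (i+1) (i+2) @ cp i (i+1) @ cp (i+1) (i+2)"
proof -
  assume a: "1 \<le> i" "i + 2 \<le> n"
  let ?X = "cnj [1] [C 1]" and ?Y = "cnj [2] [C 1]"
  have v1: "valid [1]" using n4 by simp
  have r0: "?X @ ?Y @ ?X \<simeq> ?Y @ ?X @ ?Y" using R1 by (simp add: cnj_def)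
  have e: "vperm [1,1] 1 = 1" "vperm [1,1] 2 = 2" "vperm [1,2] 1 = 2" "vperm [1,2] 2 = 3"
    by (simp_all add: sw_def)
  have v11: "valid [1,1]" "valid [1,2]" using n4 unfolding valid_def by auto
  have "cnj [1,1] [C 1] \<simeq> cp (vperm [1,1] 1) (vperm [1,1] 2)" by (rule act_c1[OF v11(1)]) (use n4 in auto)
  then have hx: "cnj [1] ?X \<simeq> cp 1 2" by (simp only: e cnj_cnj append.simps)
  have "cnj [1,2] [C 1] \<simeq> cp (vperm [1,2] 1) (vperm [1,2] 2)" by (rule act_c1[OF v11(2)]) (use n4 in auto)
  then have hy: "cnj [1] ?Y \<simeq> cp 2 3" by (simp only: e cnj_cnj append.simps)
  have base: "cp 1 2 @ cp 2 3 @ cp 1 2 \<simeq> cp 2 3 @ cp 1 2 @ cp 2 3"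
    by (rule braid_transport[OF v1 r0 hx hy])
  let ?w = "dn (i - 1) 1 @ dn i 2 @ dn (i + 1) 3"
  have vw': "valid ?w" using a by (auto simp: valid_def)
  have p: "vperm ?w 1 = i" "vperm ?w 2 = i + 1" "vperm ?w 3 = i + 2"
    using a by (simp_all add: vperm_dn)
  have h1: "cnj ?w (cp 1 2) \<simeq> cp i (i+1)" using act_c[OF vw', of 1 2] p a by simp
  have h2: "cnj ?w (cp 2 3) \<simeq> cp (i+1) (i+2)" using act_c[OF vw', of 2 3] p a by simp
  show ?thesis by (rule braid_transport[OF vw' base h1 h2])
qed

lemma G_bbc: "1 \<le> i \<Longrightarrow> i + 1 \<le> n \<Longrightarrow>
   bk i @ bk (i+1) @ cp i (i+1) @ bk (i+1) @ bk i \<simeq> [V i] @ cp i (i+1) @ [V i]"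
proof -
  assume a: "1 \<le> i" "i + 1 \<le> n"
  let ?w = "qw 1 i (i+1)"
  have vw': "valid ?w" "vperm ?w 1 = i" "vperm ?w 2 = i + 1"
    using qw1[of i "i+1"] a by simp_all
  have r: "bk 2 @ [B 1] @ [C 1] @ [B 1] @ bk 2 \<simeq> cnj [1] [C 1]"
    using R5 by (simp add: bk2 cnj_def)
  have hb2: "cnj ?w (bk 2) \<simeq> bk (i+1)" using act_b[OF vw'(1), of 2] vw' a by simp
  have hb1: "cnj ?w [B 1] \<simeq> bk i" using act_b1[OF vw'(1)] vw' a by simp
  have hc: "cnj ?w [C 1] \<simeq> cp i (i+1)" by (simp add: cp_qw)
  have "bk (i+1) @ bk i @ cp i (i+1) @ bk i @ bk (i+1) \<simeq>
        cnj ?w (bk 2) @ cnj ?w [B 1] @ cnj ?w [C 1] @ cnj ?w [B 1] @ cnj ?w (bk 2)"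
    using weq_app[OF weq_sym[OF hb2] weq_app[OF weq_sym[OF hb1] weq_app[OF weq_sym[OF hc]
      weq_app[OF weq_sym[OF hb1] weq_sym[OF hb2]]]]] .
  also have "\<dots> \<simeq> cnj ?w (bk 2) @ cnj ?w [B 1] @ cnj ?w ([C 1] @ [B 1] @ bk 2)"
    using vw' by (intro weq_ctxL weq_sym[OF cnj_app3[OF vw'(1)]])
  also have "\<dots> \<simeq> cnj ?w (bk 2 @ [B 1] @ ([C 1] @ [B 1] @ bk 2))"
    using weq_sym[OF cnj_app3[OF vw'(1)]] .
  also have "\<dots> \<simeq> cnj ?w (cnj [1] [C 1])" using r by (intro cnj_cong) simp
  also have "\<dots> = cnj (?w @ [1]) [C 1]" by (simp add: cnj_cnj)
  also have "\<dots> \<simeq> cp (vperm (?w @ [1]) 1) (vperm (?w @ [1]) 2)"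
    by (rule act_c1) (use vw' a n4 in auto)
  also have "\<dots> = cp (i+1) i"
  proof -
    have "sw 1 1 = 2" "sw 1 2 = 1" by (simp_all add: sw_def)
    then show ?thesis using vw' by (simp only: vperm_append vperm.simps)
  qed
  also have "\<dots> \<simeq> [V i] @ cp i (i+1) @ [V i]"
    by (rule weq_sym) (use cp_single[of i "i+1" i] a in \<open>simp add: sw_def\<close>)
  finally have m: "bk (i+1) @ bk i @ cp i (i+1) @ bk i @ bk (i+1) \<simeq> [V i] @ cp i (i+1) @ [V i]" .
  have bb: "bk i @ bk (i+1) \<simeq> bk (i+1) @ bk i" using a by (intro G_bb) auto
  have "bk i @ bk (i+1) @ cp i (i+1) @ bk (i+1) @ bk i =
        (bk i @ bk (i+1)) @ cp i (i+1) @ (bk (i+1) @ bk i)" by simp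
  also have "\<dots> \<simeq> (bk (i+1) @ bk i) @ cp i (i+1) @ (bk i @ bk (i+1))"
    by (rule weq_app[OF bb weq_app[OF weq_refl weq_sym[OF bb]]])
  also have "\<dots> \<simeq> [V i] @ cp i (i+1) @ [V i]" using m by simp
  finally show ?thesis .
qed

end


lemma pw_inj[simp]: "pw a = pw b \<longleftrightarrow> a = b"
  unfolding pw_def by (simp add: inj_def map_injective)

lemma pw_Cons: "pw (x # xs) = (x, True) # pw xs" by (simp add: pw_def)

lemma weq_FT: "(pw a, pw b) \<in> FT_rels n \<Longrightarrow> weq (FT_rels n) a b" by (rule weq_rel)

context fixes n :: nat begin

abbreviation EF (infix "\<approx>" 50) where "a \<approx> b \<equiv> weq (FT_rels n) a b"

lemma F_vv: "1 \<le> i \<Longrightarrow> i \<le> n - 1 \<Longrightarrow> [V i, V i] \<approx> []"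
  by (rule weq_FT) (auto simp: FT_rels_def)
lemma F_vc: "1 \<le> i \<Longrightarrow> j \<le> n - 1 \<Longrightarrow> i + 2 \<le> j \<Longrightarrow> [V i, V j] \<approx> [V j, V i]"
  by (rule weq_FT) (auto simp: FT_rels_def)
lemma F_vb: "1 \<le> i \<Longrightarrow> i + 1 \<le> n - 1 \<Longrightarrow> [V i, V (i+1), V i] \<approx> [V (i+1), V i, V (i+1)]"
  by (rule weq_FT) (auto simp: FT_rels_def)
lemma F_cv1: "3 \<le> j \<Longrightarrow> j \<le> n - 1 \<Longrightarrow> [C 1, V j] \<approx> [V j, C 1]"
  by (rule weq_FT) (auto simp: FT_rels_def)
lemma F_bv1: "2 \<le> j \<Longrightarrow> j \<le> n - 1 \<Longrightarrow> [B 1, V j] \<approx> [V j, B 1]"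
  by (rule weq_FT) (auto simp: FT_rels_def)
lemma F_bb: "1 \<le> i \<Longrightarrow> i \<le> n \<Longrightarrow> 1 \<le> j \<Longrightarrow> j \<le> n \<Longrightarrow> i \<noteq> j \<Longrightarrow> [B i, B j] \<approx> [B j, B i]"
  by (rule weq_FT) (auto simp: FT_rels_def)
lemma F_bvi: "1 \<le> i \<Longrightarrow> i \<le> n - 1 \<Longrightarrow> [B i, V i] \<approx> [V i, B (i+1)]"
  by (rule weq_FT) (auto simp: FT_rels_def)
lemma F_cbraid: "1 \<le> i \<Longrightarrow> i \<le> n - 2 \<Longrightarrow> [C i, C (i+1), C i] \<approx> [C (i+1), C i, C (i+1)]"
  by (rule weq_FT) (auto simp: FT_rels_def)
lemma F_cc: "1 \<le> i \<Longrightarrow> i \<le> n - 1 \<Longrightarrow> 1 \<le> j \<Longrightarrow> j \<le> n - 1 \<Longrightarrow> i + 2 \<le> j \<Longrightarrow> [C i, C j] \<approx> [C j, C i]"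
  by (rule weq_FT) (auto simp: FT_rels_def)
lemma F_vcv: "1 \<le> i \<Longrightarrow> i \<le> n - 2 \<Longrightarrow> [V i, C (i+1), V i] \<approx> [V (i+1), C i, V (i+1)]"
  by (rule weq_FT) (auto simp: FT_rels_def)
lemma F_bbc: "1 \<le> i \<Longrightarrow> i \<le> n - 1 \<Longrightarrow> [B i, B (i+1), C i, B (i+1), B i] \<approx> [V i, C i, V i]"
  by (rule weq_FT) (auto simp: FT_rels_def)
lemma F_bc: "1 \<le> i \<Longrightarrow> i \<le> n \<Longrightarrow> 1 \<le> j \<Longrightarrow> j \<le> n - 1 \<Longrightarrow> j + 1 < i \<Longrightarrow> [B i, C j] \<approx> [C j, B i]"
  by (rule weq_FT) (auto simp: FT_rels_def)

end


lemma FT_vsys: "vsys (FT_rels n) n"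
  by unfold_locales (simp_all add: F_vv F_vc F_vb[simplified] F_cv1[simplified] F_bv1[simplified])

lemma bk2': "bk 2 = [V 1, B 1, V 1]" by (simp add: bk_def Tw_def dn_def cnj_def)
lemma bk3': "bk 3 = [V 2, V 1, B 1, V 1, V 2]"
  by (simp add: bk_def Tw_def dn_def cnj_def numeral_3_eq_3 numeral_2_eq_2)

context fixes n :: nat assumes n4: "4 \<le> n" begin

interpretation F: vsys "FT_rels n" n by (rule FT_vsys)

abbreviation EF2 (infix "\<approx>" 50) where "a \<approx> b \<equiv> weq (FT_rels n) a b"

lemma F_bk: "1 \<le> k \<Longrightarrow> k \<le> n \<Longrightarrow> bk k \<approx> [B k]"
proof (induction k rule: nat_induct_at_least)
  case base
  have "bk (Suc 0) = [B (Suc 0)]" by (simp add: bk_def Tw_def dn_def cnj_def)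
  then show ?case by simp
next
  case (Suc k)
  have "bk (Suc k) = [V k] @ bk k @ [V k]" using Suc.hyps F.L1[of 1 k "[B 1]"] by (simp add: bk_def)
  also have "\<dots> \<approx> [V k] @ [B k] @ [V k]" using Suc by (intro weq_ctx) auto
  also have "\<dots> \<approx> [V k] @ [V k] @ [B (Suc k)]"
    using F_bvi[of k n] Suc by (intro weq_ctxL) auto
  also have "\<dots> = [V k, V k] @ [B (Suc k)]" by simp
  also have "\<dots> \<approx> [] @ [B (Suc k)]" using F_vv[of k n] Suc by (intro weq_ctxR) auto
  finally show ?case by simp
qed

lemma F_cp: "1 \<le> k \<Longrightarrow> k \<le> n - 1 \<Longrightarrow> cp k (k+1) \<approx> [C k]"
proof (induction k rule: nat_induct_at_least)
  case base
  have "cp (Suc 0) (Suc (Suc 0)) = [C (Suc 0)]" by (simp add: cp_def Tw_def dn_def cnj_def bp_def)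
  then show ?case by simp
next
  case (Suc k)
  have v: "F.valid [k, k+1]" using Suc by (simp add: F.valid_def)
  have e: "vperm [k, k+1] k = k + 1" "vperm [k, k+1] (k+1) = k + 2" by (simp_all add: sw_def)
  have "cnj [k, k+1] (cp k (k+1)) \<approx> cp (vperm [k, k+1] k) (vperm [k, k+1] (k+1))"
    by (rule F.act_c[OF v]) (use Suc in auto)
  then have "cp (Suc k) (Suc k + 1) \<approx> cnj [k, k+1] (cp k (k+1))"
    by (simp only: e) (rule weq_sym, simp)
  also have "\<dots> \<approx> cnj [k, k+1] [C k]" using Suc by (intro F.cnj_cong) auto
  also have "\<dots> = [V k] @ [V (k+1), C k, V (k+1)] @ [V k]" by (simp add: cnj_def)
  also have "\<dots> \<approx> [V k] @ [V k, C (k+1), V k] @ [V k]"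
    by (rule weq_ctx[OF weq_sym[OF F_vcv]]) (use Suc in auto)
  also have "\<dots> = [V k, V k] @ [C (k+1)] @ [V k, V k]" by simp
  also have "\<dots> \<approx> [] @ [C (k+1)] @ []" using F_vv[of k n] Suc by (intro weq_app weq_refl) auto
  finally show ?case by simp
qed

lemma A_R1: "[V 1, C 1, V 1, V 2, C 1, V 2, V 1, C 1, V 1] \<approx> [V 2, C 1, V 2, V 1, C 1, V 1, V 2, C 1, V 2]"
proof -
  have v: "F.valid [1]" using n4 by (simp add: F.valid_def)
  have b: "[C 1] @ [C 2] @ [C 1] \<approx> [C 2] @ [C 1] @ [C 2]" using F_cbraid[of 1 n, unfolded one_add_one] n4 by simp
  have hx: "cnj [1] [C 1] \<approx> [V 1, C 1, V 1]" by (simp add: cnj_def)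
  have hy: "cnj [1] [C 2] \<approx> [V 2, C 1, V 2]" using F_vcv[of 1 n, unfolded one_add_one] n4 by (simp add: cnj_def)
  show ?thesis using F.braid_transport[OF v b hx hy] by simp
qed

lemma A_R2: "[C 1, V 2, V 3, V 1, V 2, C 1, V 2, V 1, V 3, V 2] \<approx> [V 2, V 3, V 1, V 2, C 1, V 2, V 1, V 3, V 2, C 1]"
proof -
  let ?Z = "cnj [2, 3, 1, 2] [C 1]"
  have vZ: "F.valid [2, 3, 1, 2]" using n4 unfolding F.valid_def by auto
  have e: "vperm [2, 3, 1, 2] 1 = 3" "vperm [2, 3, 1, 2] 2 = 4" by (simp_all add: sw_def)
  have "?Z \<approx> cp (vperm [2, 3, 1, 2] 1) (vperm [2, 3, 1, 2] 2)" by (rule F.act_c1[OF vZ]) (use n4 in auto)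
  then have "?Z \<approx> cp 3 4" by (simp only: e)
  also have "cp 3 4 \<approx> [C 3]" using F_cp[of 3] n4 by simp
  finally have Z: "cnj [] [C 3] \<approx> ?Z" by (simp add: weq_sym)
  have c: "[C 1] @ [C 3] \<approx> [C 3] @ [C 1]" using F_cc[of 1 n 3] n4 by simp
  have "[C 1] @ ?Z \<approx> ?Z @ [C 1]" by (rule F.comm_transport[OF _ c _ Z]) simp_all
  then show ?thesis by (simp add: cnj_def)
qed

lemma A_R3: "[B 1, V 1, B 1, V 1] \<approx> [V 1, B 1, V 1, B 1]"
proof -
  have c: "[B 1] @ [B 2] \<approx> [B 2] @ [B 1]" using F_bb[of 1 n 2] n4 by simp
  have h: "cnj [] [B 2] \<approx> bk 2" using F_bk[of 2] n4 by (simp add: weq_sym)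
  have "[B 1] @ bk 2 \<approx> bk 2 @ [B 1]" by (rule F.comm_transport[OF _ c _ h]) simp_all
  then show ?thesis by (simp add: bk2')
qed

lemma A_R4: "[C 1, V 2, V 1, B 1, V 1, V 2] \<approx> [V 2, V 1, B 1, V 1, V 2, C 1]"
proof -
  have c: "[C 1] @ [B 3] \<approx> [B 3] @ [C 1]" using F_bc[of 3 n 1] n4 by (simp add: weq_sym)
  have h: "cnj [] [B 3] \<approx> bk 3" using F_bk[of 3] n4 by (simp add: weq_sym)
  have "[C 1] @ bk 3 \<approx> bk 3 @ [C 1]" by (rule F.comm_transport[OF _ c _ h]) simp_all
  then show ?thesis by (simp add: bk3')
qed

lemma A_R5: "[V 1, B 1, V 1, B 1, C 1, B 1, V 1, B 1, V 1] \<approx> [V 1, C 1, V 1]"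
proof -
  have h: "bk 2 \<approx> [B 2]" using F_bk[of 2] n4 by simp
  have bb: "[B 2] @ [B 1] \<approx> [B 1] @ [B 2]" using F_bb[of 2 n 1] n4 by simp
  have "bk 2 @ [B 1] @ [C 1] @ [B 1] @ bk 2 \<approx> [B 2] @ [B 1] @ [C 1] @ [B 1] @ [B 2]"
    by (intro weq_app[OF h] weq_app[OF weq_refl] weq_app[OF weq_refl] weq_app[OF weq_refl] h)
  also have "\<dots> = ([B 2] @ [B 1]) @ [C 1] @ ([B 1] @ [B 2])" by simp
  also have "\<dots> \<approx> ([B 1] @ [B 2]) @ [C 1] @ ([B 2] @ [B 1])"
    by (rule weq_app[OF bb weq_app[OF weq_refl weq_sym[OF bb]]])
  also have "\<dots> \<approx> [V 1, C 1, V 1]" using F_bbc[of 1 n, unfolded one_add_one] n4 by simp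
  finally show ?thesis by (simp add: bk2')
qed

end


lemma pw_eq_Nil[simp]: "pw ys = [] \<longleftrightarrow> ys = []" by (simp add: pw_def)

lemma red_mem: "(pw a, pw b) \<in> red_rels n \<Longrightarrow> weq (red_rels n) a b" by (rule weq_rel)

lemma Gred_gsys: "4 \<le> n \<Longrightarrow> gsys (red_rels n) n"
  apply unfold_locales
  apply (rule red_mem; auto simp: red_rels_def)+
  apply simp
  apply (rule red_mem; simp add: red_rels_def)+
  done

fun psi' :: "gen \<Rightarrow> gen list" where
  "psi' (V i) = [V i]"
| "psi' (C k) = cp k (k + 1)"
| "psi' (B k) = bk k"

fun gidx :: "gen \<Rightarrow> nat" where
  "gidx (V i) = i" | "gidx (C k) = k" | "gidx (B k) = k"

lemma psi_gen_eq: "1 \<le> gidx g \<Longrightarrow> psi_gen g = pw (psi' g)"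
proof (cases g)
  case (C k)
  assume "1 \<le> gidx g"
  then show ?thesis using C
    by (cases "k = 1") (auto simp: cp_def Tw_def cnj_def bp_def vdown_def vup_def dn_def vw_def)
next
  case (B k)
  assume "1 \<le> gidx g"
  then show ?thesis using B
    by (cases "k = 1") (auto simp: bk_def Tw_def cnj_def vdown_def vup_def dn_def vw_def)
qed (simp)

lemma subst_psi: "(\<forall>g\<in>set xs. 1 \<le> gidx g) \<Longrightarrow> subst_word psi_gen (pw xs) = pw (concat (map psi' xs))"
  by (induction xs) (auto simp: pw_Cons subst_word_Cons psi_gen_eq)

lemma RP: "(\<forall>g\<in>set xs \<union> set ys. 1 \<le> gidx g) \<Longrightarrow> weq R (concat (map psi' xs)) (concat (map psi' ys)) \<Longrightarrow>
  pres_eq R (subst_word psi_gen (pw xs)) (subst_word psi_gen (pw ys))"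
  by (simp add: subst_psi weq_def)

lemma RP0: "(\<forall>g\<in>set xs. 1 \<le> gidx g) \<Longrightarrow> weq R (concat (map psi' xs)) [] \<Longrightarrow>
  pres_eq R (subst_word psi_gen (pw xs)) (subst_word psi_gen [])"
  using RP[of xs "[]" R] by simp

lemma resp_psi: "4 \<le> n \<Longrightarrow> resp_rel (FT_rels n) (red_rels n) psi_gen"
proof -
  assume n4: "4 \<le> n"
  interpret G: gsys "red_rels n" n using Gred_gsys[OF n4] .
  show ?thesis
  unfolding resp_rel_def FT_rels_def
  apply (intro ballI)
  apply (elim UnE CollectE exE conjE)
  apply (simp_all only: prod.inject prod.case)
  subgoal for x i by (rule RP0) (use G.vv[of i] in auto)
  subgoal for x i j by (rule RP) (use G.vc[of i j] G.vc[of j i] in \<open>auto intro: weq_sym\<close>)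
  subgoal for x i by (rule RP) (use G.vb[of i] in auto)
  subgoal for x i by (rule RP0) (use G.G_b2[of i] in auto)
  subgoal for x i j by (rule RP) (use G.G_bb[of i j] in auto)
  subgoal for x i by (rule RP) (use G.bk_single'[of i i] in \<open>auto simp: sw_def\<close>)
  subgoal for x i j by (rule RP) (use G.bk_single'[of i j] in \<open>auto simp: sw_def\<close>)
  subgoal for x i by (rule RP0) (use G.G_c2[of i] in auto)
  subgoal for x i by (rule RP) (use G.G_cbraid[of i] in auto)
  subgoal for x i j by (rule RP) (use G.G_cc[of i j] in auto)
  subgoal for x i j by (rule RP) (use G.cp_single'[of i "i+1" j] in \<open>auto simp: sw_def\<close>)
  subgoal for x i by (rule RP) (use G.G_vcv[of i] in auto)
  subgoal for x i by (rule RP) (use G.G_bbc[of i] in auto)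
  subgoal for x i j by (rule RP) (use G.G_bc[of i j] in auto)
  done
qed



lemma subst_phi: "subst_word phi_gen w = w"
proof (induction w)
  case Nil then show ?case by simp
next
  case (Cons x w)
  then show ?case
    by (cases x) (auto simp: subst_word_Cons phi_gen_def pw_def inv_letter_def)
qed

lemma F_cc1: "weq (FT_rels n) [C 1, C 1] []" if "2 \<le> n"
  using that by (intro weq_FT) (auto simp: FT_rels_def)
lemma F_bb1: "weq (FT_rels n) [B 1, B 1] []" if "1 \<le> n"
  using that by (intro weq_FT) (auto simp: FT_rels_def)

lemma resp_phi: "4 \<le> n \<Longrightarrow> resp_rel (red_rels n) (FT_rels n) phi_gen"
  unfolding resp_rel_def red_rels_def subst_phi
  apply (intro ballI)
  apply (elim UnE CollectE exE conjE insertE emptyE)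
  apply (simp_all only: prod.inject prod.case)
  apply (simp_all only: weq_def[symmetric] pw_Nil[symmetric])
  subgoal for x i by (rule F_vb) auto
  subgoal for x i j using F_vc[where n=n and i=i and j=j] F_vc[where n=n and i=j and j=i] by (auto intro: weq_sym)
  subgoal for x i by (rule F_vv) auto
  subgoal for x j by (rule F_cv1) auto
  subgoal by (rule F_cc1) auto
  subgoal by (rule F_bb1) auto
  subgoal for x j by (rule F_bv1) auto
  subgoal by (rule A_R1) auto
  subgoal by (rule A_R2) auto
  subgoal by (rule A_R3) auto
  subgoal by (rule A_R4) auto
  subgoal by (rule A_R5) auto
  done

lemma set_cnj: "set (cnj w x) = V ` set w \<union> set x" by (auto simp: cnj_def vw_def)
lemma fst_set_pw[simp]: "fst ` set (pw xs) = set xs" by (force simp: pw_def)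
lemma cp_qw': "cp a b = cnj (qw 1 a b) [C 1]"
  by (simp add: cp_def Tw_def qw_def cnj_cnj numeral_2_eq_2)
lemma bk_dn': "bk k = cnj (dn (k - 1) 1) [B 1]" by (simp add: bk_def Tw_def)

lemma gens_phi: "2 \<le> n \<Longrightarrow> \<forall>g\<in>red_gens n. fst ` set (phi_gen g) \<subseteq> FT_gens n"
  by (auto simp: red_gens_def FT_gens_def phi_gen_def pw_def)

lemma FT_gens_idx: "g \<in> FT_gens n \<Longrightarrow> 1 \<le> gidx g"
  by (auto simp: FT_gens_def)

lemma gens_psi: "\<forall>g\<in>FT_gens n. fst ` set (psi_gen g) \<subseteq> red_gens n"
proof
  fix g assume g: "g \<in> FT_gens n"
  have "psi_gen g = pw (psi' g)" by (rule psi_gen_eq[OF FT_gens_idx[OF g]])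
  moreover have "set (psi' g) \<subseteq> red_gens n"
    using g by (cases g) (auto simp: FT_gens_def red_gens_def cp_qw' bk_dn' set_cnj qw_def bp_def)
  ultimately show "fst ` set (psi_gen g) \<subseteq> red_gens n" by simp
qed

lemma psi_id_FT: "4 \<le> n \<Longrightarrow> g \<in> FT_gens n \<Longrightarrow> pres_eq (FT_rels n) (psi_gen g) [(g, True)]"
proof -
  assume n4: "4 \<le> n" and g: "g \<in> FT_gens n"
  have "psi_gen g = pw (psi' g)" by (rule psi_gen_eq[OF FT_gens_idx[OF g]])
  moreover have "weq (FT_rels n) (psi' g) [g]"
    using g F_cp[where n=n, OF n4] F_bk[where n=n, OF n4] by (cases g) (auto simp: FT_gens_def)
  ultimately show ?thesis by (simp add: weq_def pw_def)
qed

lemma psi_id_red: "g \<in> red_gens n \<Longrightarrow> psi_gen g = [(g, True)]"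
  by (auto simp: red_gens_def pw_def)

theorem theorem11:
  fixes n :: nat
  assumes "n \<ge> 4"
  shows "induced_map (FT_rels n) phi_gen \<in> iso (Gred n) (FT n)
    \<and> induced_map (red_rels n) psi_gen \<in> hom (FT n) (Gred n)
    \<and> (\<forall>x \<in> carrier (FT n). induced_map (FT_rels n) phi_gen (induced_map (red_rels n) psi_gen x) = x)
    \<and> (\<forall>x \<in> carrier (Gred n). induced_map (red_rels n) psi_gen (induced_map (FT_rels n) phi_gen x) = x)"
proof -
  let ?phi = "induced_map (FT_rels n) phi_gen" and ?psi = "induced_map (red_rels n) psi_gen"
  have rphi: "resp_rel (red_rels n) (FT_rels n) phi_gen" using resp_phi assms by simp
  have rpsi: "resp_rel (FT_rels n) (red_rels n) psi_gen" using resp_psi assms by simp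
  have hphi: "?phi \<in> hom (Gred n) (FT n)"
    unfolding Gred_def FT_def by (rule induced_hom[OF rphi gens_phi]) (use assms in simp)
  have hpsi: "?psi \<in> hom (FT n) (Gred n)"
    unfolding Gred_def FT_def by (rule induced_hom[OF rpsi gens_psi])
  have id1: "\<forall>x \<in> carrier (FT n). ?phi (?psi x) = x"
  proof
    fix x assume "x \<in> carrier (FT n)"
    then obtain w where x: "x = pres_class (FT_rels n) w" and w: "fst ` set w \<subseteq> FT_gens n"
      by (auto simp: FT_def carrier_pres)
    have "pres_eq (FT_rels n) (subst_word psi_gen w) w"
      by (rule subst_id_on) (use w psi_id_FT assms in blast)
    then show "?phi (?psi x) = x"
      by (simp add: x induced_class[OF rpsi] induced_class[OF rphi] subst_phi pres_class_eq)
  qed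
  have id2: "\<forall>x \<in> carrier (Gred n). ?psi (?phi x) = x"
  proof
    fix x assume "x \<in> carrier (Gred n)"
    then obtain w where x: "x = pres_class (red_rels n) w" and w: "fst ` set w \<subseteq> red_gens n"
      by (auto simp: Gred_def carrier_pres)
    have "\<forall>g\<in>fst ` set w. pres_eq (red_rels n) (psi_gen g) [(g, True)]"
    proof
      fix g assume "g \<in> fst ` set w"
      then have "g \<in> red_gens n" using w by blast
      then show "pres_eq (red_rels n) (psi_gen g) [(g, True)]"
        using psi_id_red[of g n] pres_eq.refl by simp
    qed
    then have "pres_eq (red_rels n) (subst_word psi_gen w) w" by (rule subst_id_on)
    then show "?psi (?phi x) = x"
      by (simp add: x induced_class[OF rpsi] induced_class[OF rphi] subst_phi pres_class_eq)
  qed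
  have "bij_betw ?phi (carrier (Gred n)) (carrier (FT n))"
    by (rule bij_betw_byWitness[where f' = ?psi])
       (use id1 id2 hom_carrier[OF hphi] hom_carrier[OF hpsi] in auto)
  then have "?phi \<in> iso (Gred n) (FT n)" using hphi by (simp add: iso_def)
  then show ?thesis using hpsi id1 id2 by blast
qed


end
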